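(* Let $G$ be a graph on $n$ vertices with $\alpha(G)=2$. Then $\xi_f(G)\ge \frac{n}{2}$.
   Context: $\alpha(G)$ is the independence number. For positive integers $d,r$, a $d/r$-representation of a graph $G=(V,E)$ is a collection $\{P_v\}_{v\in V}$ of $d\times d$ orthogonal projectors, each of rank $r$, such that $P_vP_w=0$ for every edge $vw\in E$. The projective rank is $\xi_f(G)=\inf\{d/r : G \text{ has a } d/r\text{-representation}\}$. *)

theory Defs
  imports "Jordan_Normal_Form.DL_Rank" "Jordan_Normal_Form.Schur_Decomposition" Complex_Main
begin

definition simple_graph :: "'a set \<Rightarrow> ('a \<Rightarrow> 'a \<Rightarrow> bool) \<Rightarrow> bool" where
  "simple_graph V E \<longleftrightarrow> finite V \<and> (\<forall>v w. E v w \<longrightarrow> v \<in> V \<and> w \<in> V)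
     \<and> (\<forall>v w. E v w \<longrightarrow> E w v) \<and> (\<forall>v. \<not> E v v)"

definition independent_set :: "'a set \<Rightarrow> ('a \<Rightarrow> 'a \<Rightarrow> bool) \<Rightarrow> 'a set \<Rightarrow> bool" where
  "independent_set V E S \<longleftrightarrow> S \<subseteq> V \<and> (\<forall>v\<in>S. \<forall>w\<in>S. \<not> E v w)"

definition independence_number :: "'a set \<Rightarrow> ('a \<Rightarrow> 'a \<Rightarrow> bool) \<Rightarrow> nat" where
  "independence_number V E = Max {card S | S. independent_set V E S}"

definition orth_projector :: "nat \<Rightarrow> complex mat \<Rightarrow> bool" where
  "orth_projector d P \<longleftrightarrow> P \<in> carrier_mat d d \<and> P * P = P \<and> mat_adjoint P = P"

definition dr_representation ::
  "'a set \<Rightarrow> ('a \<Rightarrow> 'a \<Rightarrow> bool) \<Rightarrow> nat \<Rightarrow> nat \<Rightarrow> ('a \<Rightarrow> complex mat) \<Rightarrow> bool" where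
  "dr_representation V E d r P \<longleftrightarrow>
     (\<forall>v\<in>V. orth_projector d (P v) \<and> vec_space.rank d (P v) = r)
     \<and> (\<forall>v w. E v w \<longrightarrow> P v * P w = 0\<^sub>m d d)"

definition projective_rank :: "'a set \<Rightarrow> ('a \<Rightarrow> 'a \<Rightarrow> bool) \<Rightarrow> real" where
  "projective_rank V E = Inf {real d / real r | d r. d > 0 \<and> r > 0 \<and>
      (\<exists>P. dr_representation V E d r P)}"

end

theory Submission
  imports Defs "Jordan_Normal_Form.DL_Rank_Submatrix"
begin

definition herm :: "nat \<Rightarrow> (nat \<Rightarrow> nat \<Rightarrow> complex) \<Rightarrow> bool" where
  "herm d f \<longleftrightarrow> (\<forall>a<d. \<forall>b<d. f a b = cnj (f b a))"
definition idem :: "nat \<Rightarrow> (nat \<Rightarrow> nat \<Rightarrow> complex) \<Rightarrow> bool" where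
  "idem d f \<longleftrightarrow> (\<forall>a<d. \<forall>b<d. (\<Sum>k<d. f a k * f k b) = f a b)"
definition trp :: "nat \<Rightarrow> (nat \<Rightarrow> nat \<Rightarrow> complex) \<Rightarrow> (nat \<Rightarrow> nat \<Rightarrow> complex) \<Rightarrow> complex" where
  "trp d f g = (\<Sum>a<d. \<Sum>b<d. f a b * g b a)"
definition tr :: "nat \<Rightarrow> (nat \<Rightarrow> nat \<Rightarrow> complex) \<Rightarrow> complex" where
  "tr d f = (\<Sum>a<d. f a a)"

lemma T_self: assumes "idem d f" shows "trp d f f = tr d f"
  unfolding trp_def tr_def using assms unfolding idem_def by simp

lemma T_sum_right: "trp d f (\<lambda>a b. \<Sum>v\<in>C. g v a b) = (\<Sum>v\<in>C. trp d f (g v))"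
  unfolding trp_def sum_distrib_left
  by (subst sum.swap, rule sum.cong[OF refl], subst sum.swap, rule refl)

lemma delta_sum_left: assumes "a < d" shows "(\<Sum>k<(d::nat). (if a = k then 1 else 0) * (x k::complex)) = x a"
proof -
  have "(\<Sum>k<d. (if a = k then 1 else 0) * (x k::complex)) = (\<Sum>k<d. if a = k then x k else 0)"
    by (rule sum.cong) auto
  also have "\<dots> = x a" using assms by (simp add: sum.delta')
  finally show ?thesis .
qed
lemma delta_sum_right: assumes "b < d" shows "(\<Sum>k<(d::nat). (x k::complex) * (if k = b then 1 else 0)) = x b"
proof -
  have "(\<Sum>k<d. (x k::complex) * (if k = b then 1 else 0)) = (\<Sum>k<d. if b = k then x k else 0)"
    by (rule sum.cong) auto
  also have "\<dots> = x b" using assms by (simp add: sum.delta')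
  finally show ?thesis .
qed

lemma T_compl: "trp d f (\<lambda>a b. (if a = b then 1 else 0) - q a b) = tr d f - trp d f q"
proof -
  have "trp d f (\<lambda>a b. (if a = b then 1 else 0) - q a b) = (\<Sum>a<d. (\<Sum>b<d. f a b * (if b = a then 1 else 0)) - (\<Sum>b<d. f a b * q b a))"
    unfolding trp_def by (simp add: right_diff_distrib sum_subtractf)
  also have "\<dots> = (\<Sum>a<d. f a a - (\<Sum>b<d. f a b * q b a))"
    by (rule sum.cong[OF refl]) (use delta_sum_right in simp)
  finally show ?thesis unfolding trp_def tr_def by (simp add: sum_subtractf)
qed

lemma herm_idem_compl:
  assumes "herm d q" "idem d q"
  shows "herm d (\<lambda>a b. (if a = b then 1 else 0) - q a b)" "idem d (\<lambda>a b. (if a = b then 1 else 0) - q a b)"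
proof -
  show "herm d (\<lambda>a b. (if a = b then 1 else 0) - q a b)"
    unfolding herm_def
  proof (intro allI impI)
    fix a b assume "a < d" "b < d"
    then have "q a b = cnj (q b a)" using assms(1) unfolding herm_def by blast
    then show "(if a = b then 1 else 0) - q a b = cnj ((if b = a then 1 else 0) - q b a)" by simp
  qed
  show "idem d (\<lambda>a b. (if a = b then 1 else 0) - q a b)"
    unfolding idem_def
  proof (intro allI impI)
    fix a b assume ab: "a < d" "b < d"
    have "(\<Sum>k<d. ((if a = k then 1 else 0) - q a k) * ((if k = b then 1 else 0) - q k b))
      = (\<Sum>k<d. (if a = k then 1 else 0) * (if k = b then 1 else 0)) - (\<Sum>k<d. (if a = k then 1 else 0) * q k b)
        - (\<Sum>k<d. q a k * (if k = b then 1 else 0)) + (\<Sum>k<d. q a k * q k b)"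
    proof -
      have "\<And>k. ((if a = k then 1 else 0) - q a k) * ((if k = b then 1 else 0) - q k b)
        = (if a = k then 1 else 0) * (if k = b then 1 else 0) - (if a = k then 1 else 0) * q k b
          - q a k * (if k = b then 1 else 0) + q a k * q k b"
        by (simp only: left_diff_distrib right_diff_distrib) simp
      then show ?thesis by (simp only: sum.distrib sum_subtractf)
    qed
    also have "\<dots> = (if a = b then 1 else 0) - q a b - q a b + q a b"
      using ab assms(2) unfolding idem_def
      by (simp only: delta_sum_left delta_sum_right)
    finally show "(\<Sum>k<d. ((if a = k then 1 else 0) - q a k) * ((if k = b then 1 else 0) - q k b)) = (if a = b then 1 else 0) - q a b"
      by simp
  qed
qed

lemma herm_idem_sum:
  assumes fin: "finite C" and h: "\<And>v. v \<in> C \<Longrightarrow> herm d (g v)" and i: "\<And>v. v \<in> C \<Longrightarrow> idem d (g v)"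
    and o: "\<And>v w a b. v \<in> C \<Longrightarrow> w \<in> C \<Longrightarrow> v \<noteq> w \<Longrightarrow> a < d \<Longrightarrow> b < d \<Longrightarrow> (\<Sum>k<d. g v a k * g w k b) = 0"
  shows "herm d (\<lambda>a b. \<Sum>v\<in>C. g v a b)" "idem d (\<lambda>a b. \<Sum>v\<in>C. g v a b)"
proof -
  show "herm d (\<lambda>a b. \<Sum>v\<in>C. g v a b)"
    unfolding herm_def cnj_sum
  proof (intro allI impI)
    fix a b assume "a < d" "b < d"
    then show "(\<Sum>v\<in>C. g v a b) = (\<Sum>v\<in>C. cnj (g v b a))"
      using h unfolding herm_def by (metis (no_types, lifting) sum.cong)
  qed
  show "idem d (\<lambda>a b. \<Sum>v\<in>C. g v a b)"
    unfolding idem_def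
  proof (intro allI impI)
    fix a b assume ab: "a < d" "b < d"
    have "(\<Sum>k<d. (\<Sum>v\<in>C. g v a k) * (\<Sum>w\<in>C. g w k b)) = (\<Sum>v\<in>C. \<Sum>w\<in>C. \<Sum>k<d. g v a k * g w k b)"
      unfolding sum_product
      by (subst sum.swap, rule sum.cong[OF refl], subst sum.swap, rule refl)
    also have "\<dots> = (\<Sum>v\<in>C. \<Sum>k<d. g v a k * g v k b)"
    proof (rule sum.cong[OF refl])
      fix v assume v: "v \<in> C"
      have "(\<Sum>w\<in>C. \<Sum>k<d. g v a k * g w k b) = (\<Sum>w\<in>C. if w = v then (\<Sum>k<d. g v a k * g v k b) else 0)"
      proof (rule sum.cong[OF refl])
        fix w assume w: "w \<in> C"
        show "(\<Sum>k<d. g v a k * g w k b) = (if w = v then \<Sum>k<d. g v a k * g v k b else 0)"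
          using o[OF v w _ ab] by (cases "w = v") auto
      qed
      also have "\<dots> = (\<Sum>k<d. g v a k * g v k b)" using v fin by (simp add: sum.delta')
      finally show "(\<Sum>w\<in>C. \<Sum>k<d. g v a k * g w k b) = (\<Sum>k<d. g v a k * g v k b)" .
    qed
    also have "\<dots> = (\<Sum>v\<in>C. g v a b)"
      using i ab unfolding idem_def by (intro sum.cong) auto
    finally show "(\<Sum>k<d. (\<Sum>v\<in>C. g v a k) * (\<Sum>v\<in>C. g v k b)) = (\<Sum>v\<in>C. g v a b)" .
  qed
qed

lemma swap4: "(\<Sum>l<d. \<Sum>k<d. \<Sum>b<d. \<Sum>a<d. F l k a b) = (\<Sum>a<(d::nat). \<Sum>b<d. \<Sum>k<d. \<Sum>l<d. F l k a b :: 'c::comm_monoid_add)"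
proof -
  have "(\<Sum>l<d. \<Sum>k<d. \<Sum>b<d. \<Sum>a<d. F l k a b) = (\<Sum>l<d. \<Sum>b<d. \<Sum>k<d. \<Sum>a<d. F l k a b)"
    by (rule sum.cong[OF refl], rule sum.swap)
  also have "\<dots> = (\<Sum>l<d. \<Sum>b<d. \<Sum>a<d. \<Sum>k<d. F l k a b)"
    by (rule sum.cong[OF refl], rule sum.cong[OF refl], rule sum.swap)
  also have "\<dots> = (\<Sum>b<d. \<Sum>l<d. \<Sum>a<d. \<Sum>k<d. F l k a b)"
    by (rule sum.swap)
  also have "\<dots> = (\<Sum>b<d. \<Sum>a<d. \<Sum>l<d. \<Sum>k<d. F l k a b)"
    by (rule sum.cong[OF refl], rule sum.swap)
  also have "\<dots> = (\<Sum>a<d. \<Sum>b<d. \<Sum>l<d. \<Sum>k<d. F l k a b)"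
    by (rule sum.swap)
  also have "\<dots> = (\<Sum>a<d. \<Sum>b<d. \<Sum>k<d. \<Sum>l<d. F l k a b)"
    by (rule sum.cong[OF refl], rule sum.cong[OF refl], rule sum.swap)
  finally show ?thesis .
qed

lemma T_frob:
  assumes "herm d f" "idem d f" "herm d g" "idem d g"
  shows "trp d f g = (\<Sum>a<d. \<Sum>b<d. (\<Sum>k<d. f a k * g k b) * cnj (\<Sum>k<d. f a k * g k b))"
proof -
  have "trp d f g = (\<Sum>l<d. \<Sum>k<d. f l k * g k l)" unfolding trp_def by simp
  also have "\<dots> = (\<Sum>l<d. \<Sum>k<d. (\<Sum>a<d. f l a * f a k) * (\<Sum>b<d. g k b * g b l))"
    using assms(2,4) unfolding idem_def by simp
  also have "\<dots> = (\<Sum>l<d. \<Sum>k<d. \<Sum>b<d. \<Sum>a<d. f l a * (f a k * (g k b * g b l)))"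
    by (simp add: sum_distrib_left sum_distrib_right mult.assoc)
  also have "\<dots> = (\<Sum>a<d. \<Sum>b<d. \<Sum>k<d. \<Sum>l<d. f l a * (f a k * (g k b * g b l)))"
    by (rule swap4)
  also have "\<dots> = (\<Sum>a<d. \<Sum>b<d. (\<Sum>k<d. f a k * g k b) * (\<Sum>l<d. f l a * g b l))"
    unfolding sum_product by (rule sum.cong[OF refl], rule sum.cong[OF refl], rule sum.cong[OF refl], rule sum.cong[OF refl]) (simp only: mult_ac)
  also have "\<dots> = (\<Sum>a<d. \<Sum>b<d. (\<Sum>k<d. f a k * g k b) * cnj (\<Sum>k<d. f a k * g k b))"
  proof (rule sum.cong[OF refl], rule sum.cong[OF refl])
    fix a b assume "a \<in> {..<d}" "b \<in> {..<d}"
    have "(\<Sum>l<d. f l a * g b l) = cnj (\<Sum>k<d. f a k * g k b)"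
      unfolding cnj_sum complex_cnj_mult
    proof (rule sum.cong[OF refl])
      fix x assume "x \<in> {..<d}"
      then show "f x a * g b x = cnj (f a x) * cnj (g x b)"
        using assms(1,3) \<open>a \<in> {..<d}\<close> \<open>b \<in> {..<d}\<close> unfolding herm_def lessThan_iff by metis
    qed
    then show "(\<Sum>k<d. f a k * g k b) * (\<Sum>l<d. f l a * g b l) = (\<Sum>k<d. f a k * g k b) * cnj (\<Sum>k<d. f a k * g k b)"
      by simp
  qed
  finally show ?thesis .
qed

lemma T_nonneg:
  assumes "herm d f" "idem d f" "herm d g" "idem d g"
  shows "Re (trp d f g) \<ge> 0"
  unfolding T_frob[OF assms] Re_sum complex_mult_cnj by (intro sum_nonneg) simp


lemma cs_sum:
  fixes x :: "nat \<Rightarrow> real"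
  shows "(\<Sum>a<d. x a)^2 \<le> real d * (\<Sum>a<d. (x a)^2)"
proof -
  have "0 \<le> (\<Sum>a<d. \<Sum>b<d. (x a - x b)^2)" by (intro sum_nonneg) simp
  also have "\<dots> = (\<Sum>a<d. \<Sum>b<d. (x a)^2 + (x b)^2 - 2 * x a * x b)"
    by (simp add: power2_diff)
  also have "\<dots> = 2 * (real d * (\<Sum>a<d. (x a)^2)) - 2 * (\<Sum>a<d. x a)^2"
    by (simp add: sum_subtractf sum.distrib sum_distrib_left power2_eq_square sum_product algebra_simps)
  finally show ?thesis by simp
qed

lemma clique_bound:
  assumes hu: "herm d f" "idem d f" and fin: "finite C"
    and h: "\<And>v. v \<in> C \<Longrightarrow> herm d (g v)" and i: "\<And>v. v \<in> C \<Longrightarrow> idem d (g v)"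
    and o: "\<And>v w a b. v \<in> C \<Longrightarrow> w \<in> C \<Longrightarrow> v \<noteq> w \<Longrightarrow> a < d \<Longrightarrow> b < d \<Longrightarrow> (\<Sum>k<d. g v a k * g w k b) = 0"
  shows "Re (\<Sum>v\<in>C. trp d f (g v)) \<le> Re (tr d f)"
proof -
  let ?Q = "\<lambda>a b. \<Sum>v\<in>C. g v a b"
  have hq: "herm d ?Q" "idem d ?Q" using herm_idem_sum[OF fin h i o] by auto
  let ?R = "\<lambda>a b. (if a = b then 1 else 0) - ?Q a b"
  have "0 \<le> Re (trp d f ?R)"
    by (rule T_nonneg[OF hu herm_idem_compl[OF hq]])
  also have "trp d f ?R = tr d f - (\<Sum>v\<in>C. trp d f (g v))"
    by (simp only: T_compl T_sum_right)
  finally show ?thesis by simp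
qed

lemma T_sum_left: "trp d (\<lambda>a b. \<Sum>v\<in>C. g v a b) f = (\<Sum>v\<in>C. trp d (g v) f)"
  unfolding trp_def sum_distrib_right
  by (subst sum.swap, rule sum.cong[OF refl], subst sum.swap, rule refl)

lemma tr_nonneg: assumes "herm d f" "idem d f" shows "Re (tr d f) \<ge> 0"
  using T_nonneg[OF assms assms] T_self[OF assms(2)] by simp

lemma main_bound:
  fixes p :: "'v \<Rightarrow> nat \<Rightarrow> nat \<Rightarrow> complex" and V :: "'v set"
  assumes fin: "finite V"
    and hp: "\<And>v. v \<in> V \<Longrightarrow> herm d (p v)" and ip: "\<And>v. v \<in> V \<Longrightarrow> idem d (p v)"
    and orth: "\<And>v w a b. v \<in> V \<Longrightarrow> w \<in> V \<Longrightarrow> E v w \<Longrightarrow> a < d \<Longrightarrow> b < d \<Longrightarrow> (\<Sum>k<d. p v a k * p w k b) = 0"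
    and clq: "\<And>u v w. u \<in> V \<Longrightarrow> v \<in> V \<Longrightarrow> w \<in> V \<Longrightarrow> v \<noteq> u \<Longrightarrow> w \<noteq> u \<Longrightarrow> v \<noteq> w \<Longrightarrow> \<not> E u v \<Longrightarrow> \<not> E u w \<Longrightarrow> E v w"
  shows "(\<Sum>v\<in>V. Re (tr d (p v))) \<le> 2 * real d"
proof -
  define X where "X = (\<Sum>v\<in>V. Re (tr d (p v)))"
  have X0: "X \<ge> 0" unfolding X_def by (intro sum_nonneg tr_nonneg hp ip)
  define S where "S = (\<lambda>a b. \<Sum>v\<in>V. p v a b)"
  have trS: "(\<Sum>a<d. Re (S a a)) = X"
    unfolding X_def S_def tr_def Re_sum by (rule sum.swap)
  have hS: "\<And>a b. a < d \<Longrightarrow> b < d \<Longrightarrow> S b a = cnj (S a b)"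
  proof -
    fix a b assume ab: "a < d" "b < d"
    show "S b a = cnj (S a b)" unfolding S_def cnj_sum
    proof (rule sum.cong[OF refl])
      fix v assume "v \<in> V"
      then show "p v b a = cnj (p v a b)" using hp ab unfolding herm_def by blast
    qed
  qed
  have XS: "X^2 \<le> real d * (\<Sum>a<d. (Re (S a a))^2)"
    using cs_sum[of "\<lambda>a. Re (S a a)" d] trS by simp
  have "(\<Sum>a<d. (Re (S a a))^2) \<le> Re (trp d S S)"
    unfolding trp_def Re_sum
  proof (rule sum_mono)
    fix a assume a: "a \<in> {..<d}"
    have nn: "0 \<le> Re (S a b * S b a)" if b: "b \<in> {..<d}" for b
    proof -
      have "S b a = cnj (S a b)" using a b by (intro hS) auto
      then show ?thesis by (simp add: complex_mult_cnj)
    qed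
    have "S a a = cnj (S a a)" using a by (intro hS) auto
    then have "Im (S a a) = 0" by (metis cnj.sel(2) neg_equal_zero)
    then have "(Re (S a a))^2 \<le> Re (S a a * S a a)"
      by (simp add: power2_eq_square)
    also have "\<dots> \<le> (\<Sum>b<d. Re (S a b * S b a))"
      by (rule member_le_sum[OF a nn]) auto
    finally show "(Re (S a a))^2 \<le> (\<Sum>b<d. Re (S a b * S b a))" .
  qed
  also have "trp d S S = (\<Sum>u\<in>V. \<Sum>v\<in>V. trp d (p u) (p v))"
    unfolding S_def T_sum_left T_sum_right ..
  also have "Re \<dots> \<le> (\<Sum>u\<in>V. 2 * Re (tr d (p u)))"
  proof -
    have b: "Re (\<Sum>v\<in>V. trp d (p u) (p v)) \<le> 2 * Re (tr d (p u))" if u: "u \<in> V" for u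
    proof -
    have T0: "trp d (p u) (p v) = 0" if "v \<in> V" "E u v" for v
      unfolding trp_def using orth[OF u that] by simp
    let ?C = "{v \<in> V - {u}. \<not> E u v}"
    have "(\<Sum>v\<in>V. trp d (p u) (p v)) = trp d (p u) (p u) + (\<Sum>v\<in>V - {u}. trp d (p u) (p v))"
      using fin u by (simp add: sum.remove)
    also have "(\<Sum>v\<in>V - {u}. trp d (p u) (p v)) = (\<Sum>v\<in>V - {u}. if \<not> E u v then trp d (p u) (p v) else 0)"
      by (rule sum.cong[OF refl]) (auto simp: T0)
    also have "\<dots> = (\<Sum>v\<in>?C. trp d (p u) (p v))"
      by (rule sum.inter_filter[symmetric]) (use fin in simp)
    finally have eq: "(\<Sum>v\<in>V. trp d (p u) (p v)) = tr d (p u) + (\<Sum>v\<in>?C. trp d (p u) (p v))"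
      using T_self[OF ip[OF u]] by simp
    have "Re (\<Sum>v\<in>?C. trp d (p u) (p v)) \<le> Re (tr d (p u))"
    proof (rule clique_bound[OF hp[OF u] ip[OF u]])
      show "finite ?C" using fin by simp
      show "\<And>v. v \<in> ?C \<Longrightarrow> herm d (p v)" using hp by simp
      show "\<And>v. v \<in> ?C \<Longrightarrow> idem d (p v)" using ip by simp
      fix v w a b assume "v \<in> ?C" "w \<in> ?C" "v \<noteq> w" "a < d" "b < d"
      then show "(\<Sum>k<d. p v a k * p w k b) = 0"
        using orth clq[OF u, of v w] by auto
    qed
    then show "Re (\<Sum>v\<in>V. trp d (p u) (p v)) \<le> 2 * Re (tr d (p u))"
      unfolding eq by simp
  qed
  show ?thesis unfolding Re_sum[of "\<lambda>u. \<Sum>v\<in>V. trp d (p u) (p v)" V] by (rule sum_mono) (rule b)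
  qed
  also have "\<dots> = 2 * X" unfolding X_def by (simp add: sum_distrib_left)
  finally have "(\<Sum>a<d. (Re (S a a))^2) \<le> 2 * X" .
  then have "X^2 \<le> real d * (2 * X)"
    using XS by (meson mult_left_mono of_nat_0_le_iff order_trans)
  then have "X \<le> 2 * real d"
    using X0 by (cases "X = 0") (auto simp: power2_eq_square)
  then show ?thesis unfolding X_def .
qed
lemma trace_ge_count:
  fixes p :: "nat \<Rightarrow> nat \<Rightarrow> complex" and w :: "nat \<Rightarrow> nat \<Rightarrow> complex"
  assumes hp: "herm d p" and ip: "idem d p"
    and F1: "\<And>i a. i < m \<Longrightarrow> a < d \<Longrightarrow> (\<Sum>k<d. p a k * w i k) = w i a"
    and F2: "\<And>i j. i < m \<Longrightarrow> j < m \<Longrightarrow> i \<noteq> j \<Longrightarrow> (\<Sum>k<d. w i k * cnj (w j k)) = 0"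
    and F3: "\<And>i. i < m \<Longrightarrow> (\<Sum>k<d. w i k * cnj (w i k)) \<noteq> 0"
  shows "real m \<le> Re (tr d p)"
proof -
  define n where "n i = (\<Sum>k<d. w i k * cnj (w i k))" for i
  have nc: "cnj (n i) = n i" for i unfolding n_def cnj_sum by (simp add: mult.commute)
  define Q where "Q a b = (\<Sum>i<m. w i a * cnj (w i b) / n i)" for a b
  define R where "R a b = p a b - Q a b" for a b
  have hQ: "Q a b = cnj (Q b a)" for a b
    unfolding Q_def cnj_sum by (rule sum.cong[OF refl]) (simp add: nc)
  have PQ: "(\<Sum>k<d. p a k * Q k b) = Q a b" if a: "a < d" for a b
  proof -
    have "(\<Sum>k<d. p a k * Q k b) = (\<Sum>i<m. (\<Sum>k<d. p a k * w i k) * cnj (w i b) / n i)"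
      unfolding Q_def sum_distrib_left sum_divide_distrib sum_distrib_right
      by (subst sum.swap) (simp add: mult_ac)
    also have "\<dots> = Q a b" unfolding Q_def using F1 a by simp
    finally show ?thesis .
  qed
  have QP: "(\<Sum>k<d. Q a k * p k b) = Q a b" if b: "b < d" for a b
  proof -
    have "(\<Sum>k<d. Q a k * p k b) = cnj (\<Sum>k<d. p b k * Q k a)"
      unfolding cnj_sum
    proof (rule sum.cong[OF refl])
      fix k assume "k \<in> {..<d}"
      then have "p k b = cnj (p b k)" using hp b unfolding herm_def by blast
      then show "Q a k * p k b = cnj (p b k * Q k a)" using hQ[of a k] by simp
    qed
    also have "\<dots> = cnj (Q b a)" using PQ[OF b] by simp
    finally show ?thesis using hQ[of a b] by simp
  qed
  have QQ: "(\<Sum>k<d. Q a k * Q k b) = Q a b" for a b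
  proof -
    have "(\<Sum>k<d. Q a k * Q k b) = (\<Sum>k<d. \<Sum>i<m. \<Sum>j<m. (w i a * cnj (w i k) / n i) * (w j k * cnj (w j b) / n j))"
      unfolding Q_def sum_product ..
    also have "\<dots> = (\<Sum>i<m. \<Sum>j<m. \<Sum>k<d. (w i a * cnj (w i k) / n i) * (w j k * cnj (w j b) / n j))"
      by (subst sum.swap, rule sum.cong[OF refl], rule sum.swap)
    also have "\<dots> = (\<Sum>i<m. \<Sum>j<m. w i a * cnj (w j b) / (n i * n j) * (\<Sum>k<d. w j k * cnj (w i k)))"
      unfolding sum_distrib_left
      by (rule sum.cong[OF refl], rule sum.cong[OF refl], rule sum.cong[OF refl]) (simp add: field_simps)
    also have "\<dots> = (\<Sum>i<m. \<Sum>j<m. if j = i then w i a * cnj (w i b) / n i else 0)"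
    proof (rule sum.cong[OF refl], rule sum.cong[OF refl])
      fix i j assume i: "i \<in> {..<m}" and j: "j \<in> {..<m}"
      show "w i a * cnj (w j b) / (n i * n j) * (\<Sum>k<d. w j k * cnj (w i k)) = (if j = i then w i a * cnj (w i b) / n i else 0)"
      proof (cases "j = i")
        case True
        then have "n i \<noteq> 0" using F3 i unfolding n_def by simp
        moreover have "(\<Sum>k<d. w i k * cnj (w i k)) = n i" unfolding n_def ..
        ultimately show ?thesis using True by (simp add: field_simps)
      next
        case False
        then show ?thesis using F2[of j i] i j by simp
      qed
    qed
    also have "\<dots> = Q a b" unfolding Q_def by simp
    finally show ?thesis .
  qed
  have hR: "herm d R" unfolding herm_def R_def
  proof (intro allI impI)
    fix a b assume "a < d" "b < d"
    then have "p a b = cnj (p b a)" using hp unfolding herm_def by blast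
    then show "p a b - Q a b = cnj (p b a - Q b a)" using hQ[of a b] by simp
  qed
  have iR: "idem d R" unfolding idem_def R_def
  proof (intro allI impI)
    fix a b assume ab: "a < d" "b < d"
    have "(\<Sum>k<d. (p a k - Q a k) * (p k b - Q k b)) = (\<Sum>k<d. p a k * p k b) - (\<Sum>k<d. p a k * Q k b) - (\<Sum>k<d. Q a k * p k b) + (\<Sum>k<d. Q a k * Q k b)"
    proof -
      have "\<And>k. (p a k - Q a k) * (p k b - Q k b) = p a k * p k b - p a k * Q k b - Q a k * p k b + Q a k * Q k b"
        by (simp add: algebra_simps)
      then show ?thesis by (simp only: sum.distrib sum_subtractf)
    qed
    also have "\<dots> = p a b - Q a b" using ip ab PQ QP QQ unfolding idem_def by simp
    finally show "(\<Sum>k<d. (p a k - Q a k) * (p k b - Q k b)) = p a b - Q a b" .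
  qed
  have trQ: "tr d Q = of_nat m"
  proof -
    have "tr d Q = (\<Sum>i<m. n i / n i)"
      unfolding tr_def Q_def n_def sum_divide_distrib by (subst sum.swap) simp
    also have "\<dots> = (\<Sum>i<m. 1)"
      using F3 unfolding n_def by (intro sum.cong) auto
    finally show ?thesis by simp
  qed
  have "0 \<le> Re (tr d R)" by (rule tr_nonneg[OF hR iR])
  also have "tr d R = tr d p - tr d Q" unfolding tr_def R_def by (simp add: sum_subtractf)
  finally show ?thesis using trQ by simp
qed
definition ent :: "complex mat \<Rightarrow> nat \<Rightarrow> nat \<Rightarrow> complex" where
  "ent P a b = P $$ (a,b)"

lemma adjoint_index:
  assumes "P \<in> carrier_mat d d" "a < d" "b < d"
  shows "mat_adjoint P $$ (a,b) = cnj (P $$ (b,a))"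
  using assms unfolding mat_adjoint_def by (simp add: mat_of_rows_def)

lemma mult_index:
  assumes "P \<in> carrier_mat d d" "Q \<in> carrier_mat d d" "a < d" "b < d"
  shows "(P * Q) $$ (a,b) = (\<Sum>k<d. P $$ (a,k) * Q $$ (k,b))"
  using assms by (simp add: scalar_prod_def atLeast0LessThan)

lemma orth_herm_idem:
  assumes "orth_projector d P"
  shows "herm d (ent P)" "idem d (ent P)"
proof -
  have c: "P \<in> carrier_mat d d" and pp: "P * P = P" and ad: "mat_adjoint P = P"
    using assms unfolding orth_projector_def by auto
  show "herm d (ent P)" unfolding herm_def ent_def
  proof (intro allI impI)
    fix a b assume "a < d" "b < d"
    then show "P $$ (a, b) = cnj (P $$ (b, a))"
      using adjoint_index[OF c, of a b] ad by simp
  qed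
  show "idem d (ent P)" unfolding idem_def ent_def
  proof (intro allI impI)
    fix a b assume "a < d" "b < d"
    then show "(\<Sum>k<d. P $$ (a, k) * P $$ (k, b)) = P $$ (a, b)"
      using mult_index[OF c c, of a b] pp by simp
  qed
qed

lemma (in vec_space) fixed_span:
  assumes P: "P \<in> carrier_mat n n" and PP: "P * P = P"
  shows "span (set (cols P)) \<subseteq> {x \<in> carrier_vec n. P *\<^sub>v x = x}"
proof (rule span_is_subset)
  let ?W = "{x \<in> carrier_vec n. P *\<^sub>v x = x}"
  show "set (cols P) \<subseteq> ?W"
  proof
    fix c assume "c \<in> set (cols P)"
    then obtain j where j: "j < n" "c = col P j" using P by (metis cols_length cols_nth in_set_conv_nth carrier_matD(2))
    have "P *\<^sub>v col P j = col (P * P) j" by (rule col_mult2[OF P P j(1), symmetric])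
    then show "c \<in> ?W" using j P PP by auto
  qed
  show "submodule class_ring ?W V"
  proof (rule submodule.intro[OF vec_module])
    show "?W \<subseteq> carrier V" by (auto simp: module_vec_simps)
    show "\<zero>\<^bsub>V\<^esub> \<in> ?W" using P by (auto simp: module_vec_simps)
    show "a \<oplus>\<^bsub>V\<^esub> b \<in> ?W" if "a \<in> ?W" "b \<in> ?W" for a b
      using that P by (auto simp: module_vec_simps mult_add_distrib_mat_vec)
    show "a \<odot>\<^bsub>V\<^esub> x \<in> ?W" if "a \<in> carrier class_ring" "x \<in> ?W" for a x
      using that P by (auto simp: module_vec_simps mult_mat_vec)
  qed
qed

lemma rank_le_trace:
  assumes op: "orth_projector d P"
  shows "real (vec_space.rank d P) \<le> Re (tr d (ent P))"
proof -
  interpret cof_vec_space d "TYPE(complex)" .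
  have P: "P \<in> carrier_mat d d" and PP: "P * P = P" using op by (auto simp: orth_projector_def)
  obtain S where max: "maximal S (\<lambda>T. T \<subseteq> set (cols P) \<and> lin_indpt T)"
    using maximal_exists[of "(\<lambda>T. T \<subseteq> set (cols P) \<and> lin_indpt T)" "card (set (cols P))" "{}"]
    by (meson List.finite_set card_mono empty_iff empty_subsetI finite_lin_indpt2 rev_finite_subset)
  have rk: "rank P = card S" by (rule rank_card_indpt[OF P max])
  have SP: "S \<subseteq> set (cols P)" and li: "lin_indpt S" using max unfolding maximal_def by auto
  have finS: "finite S" using SP finite_subset by blast
  obtain ws where ws: "set ws = S" "distinct ws" using finite_distinct_list[OF finS] by blast
  have colsc: "set (cols P) \<subseteq> carrier_vec d" using P cols_dim by (metis carrier_matD(1))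
  have wsc: "set ws \<subseteq> carrier_vec d" using ws SP colsc by blast
  define us where "us = gram_schmidt d ws"
  have li': "\<not> lin_dep (set ws)" using li ws by simp
  note gs = gram_schmidt_result[OF wsc ws(2) li' us_def]
  have len: "length us = card S" using gs(4) ws distinct_card by metis
  have usP: "P *\<^sub>v u = u" "u \<in> carrier_vec d" if u: "u \<in> set us" for u
  proof -
    have "u \<in> span (set us)" using in_own_span[OF gs(3)] u by blast
    also have "\<dots> = span (set ws)" using gs(1) by simp
    also have "\<dots> \<subseteq> span (set (cols P))" using ws SP span_is_monotone by blast
    also have "\<dots> \<subseteq> {x \<in> carrier_vec d. P *\<^sub>v x = x}" by (rule fixed_span[OF P PP])
    finally show "P *\<^sub>v u = u" "u \<in> carrier_vec d" by auto
  qed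
  define w where "w i a = us ! i $ a" for i a
  have "real (length us) \<le> Re (tr d (ent P))"
  proof (rule trace_ge_count[OF orth_herm_idem[OF op]])
    fix i a assume i: "i < length us" and a: "a < d"
    have u: "us ! i \<in> set us" using i by simp
    have "(P *\<^sub>v (us ! i)) $ a = (\<Sum>k<d. ent P a k * w i k)"
      using a P usP(2)[OF u] by (simp add: scalar_prod_def atLeast0LessThan ent_def w_def)
    then show "(\<Sum>k<d. ent P a k * w i k) = w i a" using usP(1)[OF u] w_def by simp
  next
    fix i j assume i: "i < length us" and j: "j < length us" and ij: "i \<noteq> j"
    have "us ! i \<bullet>c us ! j = 0" using corthogonalD[OF gs(2) i j] ij by simp
    moreover have "us ! j \<in> carrier_vec d" using usP(2) j by simp
    ultimately show "(\<Sum>k<d. w i k * cnj (w j k)) = 0"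
      by (simp add: scalar_prod_def atLeast0LessThan w_def)
  next
    fix i assume i: "i < length us"
    have "us ! i \<bullet>c us ! i \<noteq> 0" using corthogonalD[OF gs(2) i i] by simp
    moreover have "us ! i \<in> carrier_vec d" using usP(2) i by simp
    ultimately show "(\<Sum>k<d. w i k * cnj (w i k)) \<noteq> 0"
      by (simp add: scalar_prod_def atLeast0LessThan w_def)
  qed
  then show ?thesis using rk len by simp
qed

lemma exists_rep:
  assumes sg: "simple_graph V E" and n: "card V = n"
  shows "\<exists>P. dr_representation V E n 1 P"
proof -
  have fin: "finite V" and irr: "\<And>v. \<not> E v v" and inV: "\<And>v w. E v w \<Longrightarrow> v \<in> V \<and> w \<in> V"
    using sg unfolding simple_graph_def by auto
  obtain h where h: "bij_betw h V {0..<n}" using ex_bij_betw_finite_nat[OF fin] n by blast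
  have hv: "h v < n" if "v \<in> V" for v using bij_betw_apply[OF h that] by simp
  have hinj: "v = w" if "v \<in> V" "w \<in> V" "h v = h w" for v w
    using h that unfolding bij_betw_def by (meson inj_onD)
  define P where "P v = mat n n (\<lambda>(a,b). if a = h v \<and> b = h v then 1 else (0::complex))" for v
  have Pc: "P v \<in> carrier_mat n n" for v unfolding P_def by simp
  have Pidx: "P v $$ (a,b) = (if a = h v \<and> b = h v then 1 else 0)" if "a < n" "b < n" for v a b
    unfolding P_def using that by simp
  have prod: "(P v * P w) $$ (a,b) = (if a = h v \<and> b = h w \<and> h v = h w then 1 else 0)"
    if ab: "a < n" "b < n" and v: "v \<in> V" for v w a b
  proof -
    have "(P v * P w) $$ (a,b) = (\<Sum>k<n. P v $$ (a,k) * P w $$ (k,b))"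
      by (rule mult_index[OF Pc Pc ab])
    also have "\<dots> = (\<Sum>k<n. if k = h v then (if a = h v \<and> b = h w \<and> h v = h w then 1 else 0) else 0)"
      by (rule sum.cong[OF refl]) (use ab in \<open>auto simp: Pidx\<close>)
    also have "\<dots> = (if a = h v \<and> b = h w \<and> h v = h w then 1 else 0)"
      using hv[OF v] by (simp add: sum.delta)
    finally show ?thesis .
  qed
  have rank1: "vec_space.rank n (P v) = 1" if v: "v \<in> V" for v
  proof -
    interpret vec_space "TYPE(complex)" n .
    have le: "rank (P v) \<le> 1"
      by (rule rank_le_1_product_entries[OF Pc, where f = "\<lambda>r. if r = h v then 1 else 0" and g = "\<lambda>c. if c = h v then 1 else 0"])
        (auto simp: Pidx P_def)
    have I: "{i. i < n \<and> i \<in> {h v}} = {h v}" using hv[OF v] by auto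
    have sc: "submatrix (P v) {h v} {h v} \<in> carrier_mat 1 1"
      unfolding submatrix_def using Pc[of v] I by simp
    have pk: "pick {h v} 0 = h v" by (auto intro!: Least_equality)
    have "submatrix (P v) {h v} {h v} $$ (0,0) = 1"
      unfolding submatrix_def using Pc[of v] I pk hv[OF v] by (simp add: Pidx)
    then have "det (submatrix (P v) {h v} {h v}) \<noteq> 0" using det_single[OF sc] by simp
    from rank_gt_minor[OF Pc this] have "card {j. j < n \<and> j \<in> {h v}} \<le> rank (P v)" .
    then have "1 \<le> rank (P v)" unfolding I by simp
    with le show ?thesis by simp
  qed
  have "dr_representation V E n 1 P"
    unfolding dr_representation_def
  proof (intro conjI ballI allI impI)
    fix v assume v: "v \<in> V"
    show "vec_space.rank n (P v) = 1" by (rule rank1[OF v])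
    show "orth_projector n (P v)" unfolding orth_projector_def
    proof (intro conjI)
      show "P v \<in> carrier_mat n n" by (rule Pc)
      show "P v * P v = P v"
      proof (rule eq_matI)
        fix a b assume "a < dim_row (P v)" "b < dim_col (P v)"
        then have ab: "a < n" "b < n" using Pc[of v] by auto
        show "(P v * P v) $$ (a,b) = P v $$ (a,b)"
          by (subst prod[OF ab v]) (simp add: Pidx[OF ab])
      qed (use Pc[of v] in auto)
      show "mat_adjoint (P v) = P v"
        by (rule eq_matI) (use Pc[of v] in \<open>auto simp: adjoint_index[OF Pc] Pidx mat_adjoint_def mat_of_rows_def\<close>)
    qed
  next
    fix v w assume e: "E v w"
    then have v: "v \<in> V" and w: "w \<in> V" using inV by auto
    have "v \<noteq> w" using e irr by auto
    then have "h v \<noteq> h w" using hinj v w by auto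
    then show "P v * P w = 0\<^sub>m n n"
      by (intro eq_matI) (use Pc in \<open>auto simp: prod[OF _ _ v]\<close>)
  qed
  then show ?thesis by blast
qed

lemma indep_facts:
  assumes sg: "simple_graph V E" and ind: "independence_number V E = 2"
  shows "2 \<le> card V"
    and "\<And>u v w. u \<in> V \<Longrightarrow> v \<in> V \<Longrightarrow> w \<in> V \<Longrightarrow> v \<noteq> u \<Longrightarrow> w \<noteq> u \<Longrightarrow> v \<noteq> w \<Longrightarrow> \<not> E u v \<Longrightarrow> \<not> E u w \<Longrightarrow> E v w"
proof -
  have fin: "finite V" and sym: "\<And>v w. E v w \<Longrightarrow> E w v" and irr: "\<And>v. \<not> E v v"
    using sg unfolding simple_graph_def by auto
  define K where "K = {card S | S. independent_set V E S}"
  have Kb: "K \<subseteq> {..card V}"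
    unfolding K_def independent_set_def using fin by (auto intro: card_mono)
  then have Kf: "finite K" using finite_subset by blast
  have "independent_set V E {}" unfolding independent_set_def by simp
  then have Kne: "K \<noteq> {}" unfolding K_def by blast
  have MK: "Max K = 2" using ind unfolding independence_number_def K_def by simp
  have "2 \<in> K" using Max_in[OF Kf Kne] MK by simp
  then have "\<exists>S. independent_set V E S \<and> card S = 2" unfolding K_def by auto
  then obtain S where S: "independent_set V E S" "card S = 2" by blast
  then show "2 \<le> card V" using fin unfolding independent_set_def by (metis card_mono)
  have le2: "card S \<le> 2" if "independent_set V E S" for S
  proof -
    have "card S \<in> K" using that unfolding K_def by blast
    then show ?thesis using Max_ge[OF Kf, of "card S"] MK by simp
  qed
  fix u v w assume u: "u \<in> V" and v: "v \<in> V" and w: "w \<in> V" and d: "v \<noteq> u" "w \<noteq> u" "v \<noteq> w"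
    and nuv: "\<not> E u v" and nuw: "\<not> E u w"
  show "E v w"
  proof (rule ccontr)
    assume nvw: "\<not> E v w"
    have "independent_set V E {u, v, w}"
      unfolding independent_set_def using u v w nuv nuw nvw sym irr by blast
    then have "card {u, v, w} \<le> 2" by (rule le2)
    moreover have "card {u, v, w} = 3" using d by auto
    ultimately show False by simp
  qed
qed

theorem proposition1p6:
  fixes V :: "'a set" and E :: "'a \<Rightarrow> 'a \<Rightarrow> bool" and n :: nat
  assumes "simple_graph V E"
    and "card V = n"
    and "independence_number V E = 2"
  shows "projective_rank V E \<ge> real n / 2"
proof -
  note sg = assms(1)
  have fin: "finite V" using sg unfolding simple_graph_def by auto
  have n2: "2 \<le> n" using indep_facts(1)[OF sg assms(3)] assms(2) by simp
  have clq: "\<And>u v w. u \<in> V \<Longrightarrow> v \<in> V \<Longrightarrow> w \<in> V \<Longrightarrow> v \<noteq> u \<Longrightarrow> w \<noteq> u \<Longrightarrow> v \<noteq> w \<Longrightarrow> \<not> E u v \<Longrightarrow> \<not> E u w \<Longrightarrow> E v w"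
    using indep_facts(2)[OF sg assms(3)] by blast
  define R where "R = {real d / real r | d r. d > 0 \<and> r > 0 \<and> (\<exists>P. dr_representation V E d r P)}"
  have Rne: "R \<noteq> {}"
  proof -
    obtain P where P: "dr_representation V E n 1 P" using exists_rep[OF sg assms(2)] by blast
    have "real n / real (1::nat) \<in> R"
      by (unfold R_def, rule CollectI, rule exI[of _ n], rule exI[of _ "1::nat"]) (use n2 P in auto)
    then show ?thesis by blast
  qed
  have lb: "real n / 2 \<le> x" if x: "x \<in> R" for x
  proof -
    obtain d r P where x: "x = real d / real r" and d: "d > 0" and r: "r > 0"
      and rep: "dr_representation V E d r P" using x unfolding R_def by blast
    have op: "\<And>v. v \<in> V \<Longrightarrow> orth_projector d (P v)" and rk: "\<And>v. v \<in> V \<Longrightarrow> vec_space.rank d (P v) = r"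
      and orth0: "\<And>v w. E v w \<Longrightarrow> P v * P w = 0\<^sub>m d d"
      using rep unfolding dr_representation_def by auto
    have inV: "\<And>v w. E v w \<Longrightarrow> v \<in> V \<and> w \<in> V" using sg unfolding simple_graph_def by auto
    have "(\<Sum>v\<in>V. Re (tr d (ent (P v)))) \<le> 2 * real d"
    proof (rule main_bound[OF fin])
      show "\<And>v. v \<in> V \<Longrightarrow> herm d (ent (P v))" using orth_herm_idem op by blast
      show "\<And>v. v \<in> V \<Longrightarrow> idem d (ent (P v))" using orth_herm_idem op by blast
      show "\<And>u v w. u \<in> V \<Longrightarrow> v \<in> V \<Longrightarrow> w \<in> V \<Longrightarrow> v \<noteq> u \<Longrightarrow> w \<noteq> u \<Longrightarrow> v \<noteq> w \<Longrightarrow> \<not> E u v \<Longrightarrow> \<not> E u w \<Longrightarrow> E v w"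
        by (rule clq)
      fix v w a b assume v: "v \<in> V" and w: "w \<in> V" and e: "E v w" and a: "a < d" and b: "b < d"
      have cv: "P v \<in> carrier_mat d d" and cw: "P w \<in> carrier_mat d d"
        using op[OF v] op[OF w] unfolding orth_projector_def by auto
      have "(P v * P w) $$ (a,b) = 0" using orth0[OF e] a b by simp
      then show "(\<Sum>k<d. ent (P v) a k * ent (P w) k b) = 0"
        using mult_index[OF cv cw a b] unfolding ent_def by simp
    qed
    moreover have "(\<Sum>v\<in>V. real r) \<le> (\<Sum>v\<in>V. Re (tr d (ent (P v))))"
      by (rule sum_mono) (use rank_le_trace op rk in metis)
    ultimately have "real n * real r \<le> 2 * real d" using assms(2) by simp
    also have "2 * real d = (2 * x) * real r" using x r by simp
    finally have "real n \<le> 2 * x" using r by (meson mult_le_cancel_right_pos of_nat_0_less_iff)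
    then show ?thesis by simp
  qed
  have "real n / 2 \<le> Inf R" by (rule cInf_greatest[OF Rne lb])
  then show ?thesis unfolding projective_rank_def R_def by simp
qed


end
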